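(* Consider the coupling process described in the context, run on a hypergraph colouring instance with pinnings $(H,\mathcal P)$, $H=(V,\mathcal E)$, with integer parameters $0<k_2<k_1\le k$ such that $k_1\le|e|\le k$ for all $e\in\mathcal E$, a vertex $v$ and distinct colours $c_1,c_2$. Then: (1) every coloured vertex is in $V_1$ or adjacent to $V_1$, i.e. $V_{\mathrm{col}}\subseteq\Gamma_{\mathrm{ver}}(V_1)$ at the end of the process; (2) the distributions of the output partial colourings $X$ and $Y$ are pre-Gibbs with respect to $\mu_{\mathcal C_1}$ and $\mu_{\mathcal C_2}$ respectively.
   Context: A hypergraph colouring instance with pinnings is a pair $(H,\mathcal P)$ where $H=(V,\mathcal E)$ is a hypergraph and $\mathcal P=\{P_e\subseteq[q]:e\in\mathcal E\}$; a colouring $\sigma\in[q]^V$ is proper if $|\{\sigma(u):u\in e\}\cup P_e|>1$ for all $e$. A partial colouring is an element of $([q]\cup\{-\})^V$, where $-$ means uncoloured; a full colouring $\sigma$ is consistent with a partial colouring $X$ (written $\sigma\models X$) if they agree on all vertices coloured by $X$. $\mathcal C_X$ is the set of proper colourings consistent with $X$, $\mu_{\mathcal C'}$ denotes the uniform distribution on a set $\mathcal C'$, and $\mathcal C_i$ ($i=1,2$) is the set of proper colourings with $v$ coloured $c_i$. For a set $\mathcal C'$ of proper colourings, a distribution $\mu$ on partial colourings is pre-Gibbs with respect to $\mu_{\mathcal C'}$ if for every $\sigma\in\mathcal C'$, $\mu_{\mathcal C'}(\sigma)=\sum_{\sigma':\sigma\models\sigma'}\mu(\sigma')\,\mu_{\mathcal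 C'}(\sigma\mid\sigma')$. The marginal distribution at a vertex $u$ conditioned on a partial colouring $X$ is the law of $\sigma(u)$ for $\sigma$ uniform in $\mathcal C_X$. A partial colouring $X$ satisfies a hyperedge $e$ if the colours of the coloured vertices of $e$ together with $P_e$ contain at least two distinct colours. For $u\in V$, $\Gamma_{\mathrm{ver}}(u)=\{w:\exists e\in\mathcal E,\{u,w\}\subseteq e\}\cup\{u\}$ (with $\mathcal E$ the original hyperedge set) and $\Gamma_{\mathrm{ver}}(U)=\bigcup_{u\in U}\Gamma_{\mathrm{ver}}(u)$. The coupling process: fix arbitrary orderings of vertices and hyperedges. Let $X_0$ ($Y_0$) colour $v$ with $c_1$ ($c_2$) and leave all else uncoloured. Initialise $V_1=\{v\}$, $V_2=V\setminus V_1$, $V_{\mathrm{col}}=\{v\}$, $X=X_0$, $Y=Y_0$, and a working copy $\mathcal E'$ of $\mathcal E$. While some $e\in\mathcal E'$ meets both $V_1$ and $V_2$: let $e$ be the first such hyperedge and $u$ the first vertex of $e\cap V_2$; sample $(c_x,c_y)$ from a maximal coupling of the marginal distribution at $u$ conditioned on $X$ and the marginal at $u$ conditioned on $Y$; colour $u$ by $c_x$ in $X$ and by $c_y$ in $Y$; add $u$ to $V_{\mathrm{col}}$; if $c_x\ne c_y$, move $u$ from $V_2$ to $V_1$; remove from $\mathcal E'$ every hyperedge containing $u$ that is satisfied by both $X$ and $Y$; then for every hyperedge $e'\in\mathcal E'$ containing $u$ with $e'\cap V_1\ne\emptyset$, $e'\cap V_2\neq\emptyset$ and $|e'\cap V_{\mathrm{col}}|=k_2$,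 set $V_1\leftarrow V_1\cup(e'\setminus V_{\mathrm{col}})$, $V_2\leftarrow V\setminus V_1$ and remove $e'$ from $\mathcal E'$. The output is $V_{\mathrm{col}}$, the partition $V_1\sqcup V_2=V$, and the partial colourings $X,Y$ defined on $V_{\mathrm{col}}$. *)

theory Defs
  imports "HOL-Probability.Probability"
begin

text \<open>Hypergraph H = (V, E): hyperedges are indices e in E with vertex sets verts e;
  pinnings are pin e (a subset of the colours {1..q}).  Full colourings are functions
  'v => nat, with colours in {1..q} on V and value 0 (irrelevant) outside V.\<close>

type_synonym 'v pcol = "'v \<Rightarrow> nat option"
type_synonym ('v, 'e) cstate = "'v set \<times> 'v set \<times> 'v pcol \<times> 'v pcol \<times> 'e set"
  \<comment> \<open>(V1, Vcol, X, Y, E') ; V2 is always V - V1\<close>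

definition colourings :: "'v set \<Rightarrow> nat \<Rightarrow> ('v \<Rightarrow> nat) set" where
  "colourings V q = {\<sigma>. (\<forall>u\<in>V. \<sigma> u \<in> {1..q}) \<and> (\<forall>u. u \<notin> V \<longrightarrow> \<sigma> u = 0)}"

definition proper :: "'e set \<Rightarrow> ('e \<Rightarrow> 'v set) \<Rightarrow> ('e \<Rightarrow> nat set) \<Rightarrow> ('v \<Rightarrow> nat) \<Rightarrow> bool" where
  "proper E verts pin \<sigma> = (\<forall>e\<in>E. card (\<sigma> ` verts e \<union> pin e) > 1)"

definition proper_colourings ::
  "'v set \<Rightarrow> 'e set \<Rightarrow> ('e \<Rightarrow> 'v set) \<Rightarrow> ('e \<Rightarrow> nat set) \<Rightarrow> nat \<Rightarrow> ('v \<Rightarrow> nat) set" where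
  "proper_colourings V E verts pin q = {\<sigma> \<in> colourings V q. proper E verts pin \<sigma>}"

definition consistent :: "('v \<Rightarrow> nat) \<Rightarrow> 'v pcol \<Rightarrow> bool" where
  "consistent \<sigma> X = (\<forall>u c. X u = Some c \<longrightarrow> \<sigma> u = c)"

definition CX ::
  "'v set \<Rightarrow> 'e set \<Rightarrow> ('e \<Rightarrow> 'v set) \<Rightarrow> ('e \<Rightarrow> nat set) \<Rightarrow> nat \<Rightarrow> 'v pcol \<Rightarrow> ('v \<Rightarrow> nat) set" where
  "CX V E verts pin q X = {\<sigma> \<in> proper_colourings V E verts pin q. consistent \<sigma> X}"

definition Cfix ::
  "'v set \<Rightarrow> 'e set \<Rightarrow> ('e \<Rightarrow> 'v set) \<Rightarrow> ('e \<Rightarrow> nat set) \<Rightarrow> nat \<Rightarrow> 'v \<Rightarrow> nat \<Rightarrow> ('v \<Rightarrow> nat) set" where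
  "Cfix V E verts pin q v c = {\<sigma> \<in> proper_colourings V E verts pin q. \<sigma> v = c}"

definition marginal ::
  "'v set \<Rightarrow> 'e set \<Rightarrow> ('e \<Rightarrow> 'v set) \<Rightarrow> ('e \<Rightarrow> nat set) \<Rightarrow> nat \<Rightarrow> 'v pcol \<Rightarrow> 'v \<Rightarrow> nat pmf" where
  "marginal V E verts pin q X u = map_pmf (\<lambda>\<sigma>. \<sigma> u) (pmf_of_set (CX V E verts pin q X))"

definition pre_Gibbs :: "'v pcol pmf \<Rightarrow> ('v \<Rightarrow> nat) set \<Rightarrow> bool" where
  "pre_Gibbs \<mu> C' = (\<forall>\<sigma>\<in>C'. pmf (pmf_of_set C') \<sigma> =
      (\<Sum>\<^sub>\<infinity>\<sigma>' \<in> {\<sigma>'. consistent \<sigma> \<sigma>'}.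
          pmf \<mu> \<sigma>' * pmf (cond_pmf (pmf_of_set C') {\<tau>. consistent \<tau> \<sigma>'}) \<sigma>))"

definition is_coupling :: "('a \<times> 'b) pmf \<Rightarrow> 'a pmf \<Rightarrow> 'b pmf \<Rightarrow> bool" where
  "is_coupling r p p' = (map_pmf fst r = p \<and> map_pmf snd r = p')"

definition maximal_coupling :: "('a \<times> 'a) pmf \<Rightarrow> 'a pmf \<Rightarrow> 'a pmf \<Rightarrow> bool" where
  "maximal_coupling r p p' = (is_coupling r p p' \<and>
     (\<forall>r'. is_coupling r' p p' \<longrightarrow>
        measure_pmf.prob r {(a, b). a \<noteq> b} \<le> measure_pmf.prob r' {(a, b). a \<noteq> b}))"

definition satisfies :: "('e \<Rightarrow> 'v set) \<Rightarrow> ('e \<Rightarrow> nat set) \<Rightarrow> 'v pcol \<Rightarrow> 'e \<Rightarrow> bool" where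
  "satisfies verts pin X e = (card ({c. \<exists>w\<in>verts e. X w = Some c} \<union> pin e) \<ge> 2)"

definition Gamma_ver :: "'e set \<Rightarrow> ('e \<Rightarrow> 'v set) \<Rightarrow> 'v set \<Rightarrow> 'v set" where
  "Gamma_ver E verts U = (\<Union>u\<in>U. {w. \<exists>e\<in>E. u \<in> verts e \<and> w \<in> verts e} \<union> {u})"

definition first_of :: "'a list \<Rightarrow> 'a set \<Rightarrow> 'a" where
  "first_of xs S = hd (filter (\<lambda>x. x \<in> S) xs)"

definition crossing :: "'v set \<Rightarrow> ('e \<Rightarrow> 'v set) \<Rightarrow> 'v set \<Rightarrow> 'e \<Rightarrow> bool" where
  "crossing V verts V1 e = (verts e \<inter> V1 \<noteq> {} \<and> verts e \<inter> (V - V1) \<noteq> {})"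

text \<open>One iteration of the while loop (identity once the loop condition fails).
  The chosen vertex u is the first UNCOLOURED vertex of e \<inter> V2;
  if there is none, e is discarded from E'.  The final "for every hyperedge e'" loop
  is performed in the fixed hyperedge order es.\<close>
definition coupling_step ::
  "'v set \<Rightarrow> 'e set \<Rightarrow> ('e \<Rightarrow> 'v set) \<Rightarrow> ('e \<Rightarrow> nat set) \<Rightarrow> nat \<Rightarrow> nat \<Rightarrow> 'v list \<Rightarrow> 'e list \<Rightarrow>
   ('v pcol \<Rightarrow> 'v pcol \<Rightarrow> 'v \<Rightarrow> (nat \<times> nat) pmf) \<Rightarrow> ('v, 'e) cstate \<Rightarrow> ('v, 'e) cstate pmf" where
  "coupling_step V E verts pin q k2 vs es coup s =
    (case s of (V1, Vcol, X, Y, E') \<Rightarrow>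
      if \<not> (\<exists>e\<in>E'. crossing V verts V1 e) then return_pmf s
      else
        let e = first_of es {e \<in> E'. crossing V verts V1 e};
            U = verts e \<inter> (V - V1) - Vcol
        in if U = {} then return_pmf (V1, Vcol, X, Y, E' - {e})
        else
          let u = first_of vs U
          in map_pmf (\<lambda>(cx, cy).
               let X' = X(u := Some cx);
                   Y' = Y(u := Some cy);
                   Vcol' = insert u Vcol;
                   V1' = (if cx \<noteq> cy then insert u V1 else V1);
                   E1 = E' - {e'. u \<in> verts e' \<and> satisfies verts pin X' e' \<and> satisfies verts pin Y' e'};
                   (V1'', E2) = fold (\<lambda>e' (A, F).
                        if e' \<in> F \<and> u \<in> verts e' \<and> crossing V verts A e' \<and> card (verts e' \<inter> Vcol') = k2
                        then (A \<union> (verts e' - Vcol'), F - {e'}) else (A, F)) es (V1', E1)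
               in (V1'', Vcol', X', Y', E2))
             (coup X Y u))"

definition coupling_init :: "'e set \<Rightarrow> 'v \<Rightarrow> nat \<Rightarrow> nat \<Rightarrow> ('v, 'e) cstate" where
  "coupling_init E v c1 c2 = ({v}, {v}, (\<lambda>_. None)(v := Some c1), (\<lambda>_. None)(v := Some c2), E)"

text \<open>The process terminates after at most card V + card E iterations (each non-final
  iteration either colours a new vertex or removes a hyperedge from E'), so iterating
  that many times gives the distribution of the final state.\<close>
definition coupling_output ::
  "'v set \<Rightarrow> 'e set \<Rightarrow> ('e \<Rightarrow> 'v set) \<Rightarrow> ('e \<Rightarrow> nat set) \<Rightarrow> nat \<Rightarrow> nat \<Rightarrow> 'v list \<Rightarrow> 'e list \<Rightarrow>
   ('v pcol \<Rightarrow> 'v pcol \<Rightarrow> 'v \<Rightarrow> (nat \<times> nat) pmf) \<Rightarrow> 'v \<Rightarrow> nat \<Rightarrow> nat \<Rightarrow> ('v, 'e) cstate pmf" where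
  "coupling_output V E verts pin q k2 vs es coup v c1 c2 =
    ((\<lambda>p. bind_pmf p (coupling_step V E verts pin q k2 vs es coup)) ^^ (card V + card E))
      (return_pmf (coupling_init E v c1 c2))"

definition out_V1 :: "('v, 'e) cstate \<Rightarrow> 'v set" where "out_V1 s = fst s"
definition out_Vcol :: "('v, 'e) cstate \<Rightarrow> 'v set" where "out_Vcol s = fst (snd s)"
definition out_X :: "('v, 'e) cstate \<Rightarrow> 'v pcol" where "out_X s = fst (snd (snd s))"
definition out_Y :: "('v, 'e) cstate \<Rightarrow> 'v pcol" where "out_Y s = fst (snd (snd (snd s)))"

end

theory Submission
  imports Defs
begin


lemma first_of_in:
  assumes "S \<subseteq> set xs" "S \<noteq> {}"
  shows "first_of xs S \<in> S"
proof -
  have "filter (\<lambda>x. x \<in> S) xs \<noteq> []" using assms by (auto simp: filter_empty_conv)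
  then have "hd (filter (\<lambda>x. x \<in> S) xs) \<in> set (filter (\<lambda>x. x \<in> S) xs)" by (rule hd_in_set)
  then show ?thesis unfolding first_of_def by simp
qed

lemma fold_mono_gen:
  "fst (fold (\<lambda>e' (A, F). if P e' A F then (A \<union> h e', F - {e'}) else (A, F)) xs (A, F)) \<supseteq> A
   \<and> snd (fold (\<lambda>e' (A, F). if P e' A F then (A \<union> h e', F - {e'}) else (A, F)) xs (A, F)) \<subseteq> F"
proof (induction xs arbitrary: A F)
  case Nil then show ?case by simp
next
  case (Cons a xs)
  show ?case
  proof (cases "P a A F")
    case True
    with Cons.IH[of "A \<union> h a" "F - {a}"] show ?thesis by auto
  next
    case False
    with Cons.IH[of A F] show ?thesis by auto
  qed
qed

lemma finite_colourings: "finite V \<Longrightarrow> finite (colourings V q)"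
proof -
  assume "finite V"
  have "colourings V q = {f. \<forall>x. (x \<in> V \<longrightarrow> f x \<in> {1..q}) \<and> (x \<notin> V \<longrightarrow> f x = 0)}"
    unfolding colourings_def by auto
  then show ?thesis using finite_set_of_finite_funs[OF \<open>finite V\<close>, of "{1..q}" 0] by simp
qed

lemma finite_CX: "finite V \<Longrightarrow> finite (CX V E verts pin q X)"
  by (rule finite_subset[OF _ finite_colourings[of V q]]) (auto simp: CX_def proper_colourings_def)

lemma pmf_of_set_split:
  fixes S :: "'a set" and h :: "'a \<Rightarrow> 'b"
  assumes "finite S" "S \<noteq> {}"
  shows "bind_pmf (map_pmf h (pmf_of_set S)) (\<lambda>c. pmf_of_set {x\<in>S. h x = c}) = pmf_of_set S"
proof (rule pmf_eqI)
  fix z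
  have "pmf (bind_pmf (map_pmf h (pmf_of_set S)) (\<lambda>c. pmf_of_set {x\<in>S. h x = c})) z
      = (\<Sum>y\<in>S. pmf (pmf_of_set {x\<in>S. h x = h y}) z) / real (card S)"
    by (simp add: bind_map_pmf pmf_bind_pmf_of_set assms o_def)
  also have "\<dots> = indicator S z / real (card S)"
  proof (cases "z \<in> S")
    case False
    have "pmf (pmf_of_set {x\<in>S. h x = h y}) z = 0" if "y \<in> S" for y
    proof -
      have "{x\<in>S. h x = h y} \<noteq> {}" using that by auto
      then show ?thesis using False assms by (simp add: indicator_def)
    qed
    then show ?thesis using False by (simp add: indicator_def)
  next
    case True
    let ?T = "{x\<in>S. h x = h z}"
    have fT: "finite ?T" using assms by simp
    have neT: "card ?T > 0" using True fT by (auto simp: card_gt_0_iff)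
    have "(\<Sum>y\<in>S. pmf (pmf_of_set {x\<in>S. h x = h y}) z)
        = (\<Sum>y\<in>S. if h y = h z then 1 / real (card ?T) else 0)"
    proof (rule sum.cong[OF refl])
      fix y assume "y \<in> S"
      have ne: "{x\<in>S. h x = h y} \<noteq> {}" using \<open>y \<in> S\<close> by auto
      show "pmf (pmf_of_set {x\<in>S. h x = h y}) z = (if h y = h z then 1 / real (card ?T) else 0)"
        using True \<open>y \<in> S\<close> assms by (subst pmf_of_set[OF ne]) (auto simp: indicator_def)
    qed
    also have "\<dots> = (\<Sum>y\<in>?T. 1 / real (card ?T))"
      by (subst sum.inter_filter[symmetric]) (auto simp: assms intro!: sum.cong)
    also have "\<dots> = 1" using neT by simp
    finally show ?thesis using True by simp
  qed
  also have "\<dots> = pmf (pmf_of_set S) z" using assms by simp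
  finally show "pmf (bind_pmf (map_pmf h (pmf_of_set S)) (\<lambda>c. pmf_of_set {x\<in>S. h x = c})) z
      = pmf (pmf_of_set S) z" .
qed

definition newst where
  "newst V verts pin k2 es V1 Vcol X Y E' u cx cy =
            (let X' = X(u := Some cx);
                   Y' = Y(u := Some cy);
                   Vcol' = insert u Vcol;
                   V1' = (if cx \<noteq> cy then insert u V1 else V1);
                   E1 = E' - {e'. u \<in> verts e' \<and> satisfies verts pin X' e' \<and> satisfies verts pin Y' e'};
                   (V1'', E2) = fold (\<lambda>e' (A, F).
                        if e' \<in> F \<and> u \<in> verts e' \<and> crossing V verts A e' \<and> card (verts e' \<inter> Vcol') = k2
                        then (A \<union> (verts e' - Vcol'), F - {e'}) else (A, F)) es (V1', E1)
               in (V1'', Vcol', X', Y', E2))"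

lemma step_eq:
  "coupling_step V E verts pin q k2 vs es coup (V1, Vcol, X, Y, E') =
    (if \<not> (\<exists>e\<in>E'. crossing V verts V1 e) then return_pmf (V1, Vcol, X, Y, E')
      else
        let e = first_of es {e \<in> E'. crossing V verts V1 e};
            U = verts e \<inter> (V - V1) - Vcol
        in if U = {} then return_pmf (V1, Vcol, X, Y, E' - {e})
        else map_pmf (\<lambda>(cx, cy). newst V verts pin k2 es V1 Vcol X Y E' (first_of vs U) cx cy)
             (coup X Y (first_of vs U)))"
  unfolding coupling_step_def newst_def Let_def prod.case by (rule refl)

lemma newst_props:
  assumes "newst V verts pin k2 es V1 Vcol X Y E' u cx cy = (V1n, Vcoln, Xn, Yn, En)"
  shows "V1 \<subseteq> V1n" "Vcoln = insert u Vcol" "Xn = X(u := Some cx)" "Yn = Y(u := Some cy)" "En \<subseteq> E'"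
proof -
  let ?Vc = "insert u Vcol"
  let ?g = "(\<lambda>e' (A, F).
                        if e' \<in> F \<and> u \<in> verts e' \<and> crossing V verts A e' \<and> card (verts e' \<inter> ?Vc) = k2
                        then (A \<union> (verts e' - ?Vc), F - {e'}) else (A, F))"
  let ?V1' = "(if cx \<noteq> cy then insert u V1 else V1)"
  let ?E1 = "E' - {e'. u \<in> verts e' \<and> satisfies verts pin (X(u := Some cx)) e' \<and> satisfies verts pin (Y(u := Some cy)) e'}"
  have eq: "newst V verts pin k2 es V1 Vcol X Y E' u cx cy =
     (fst (fold ?g es (?V1', ?E1)), ?Vc, X(u := Some cx), Y(u := Some cy), snd (fold ?g es (?V1', ?E1)))"
    unfolding newst_def Let_def by (simp split: prod.split)
  have m: "?V1' \<subseteq> fst (fold ?g es (?V1', ?E1)) \<and> snd (fold ?g es (?V1', ?E1)) \<subseteq> ?E1"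
    using fold_mono_gen[where P="\<lambda>e' A F. e' \<in> F \<and> u \<in> verts e' \<and> crossing V verts A e' \<and> card (verts e' \<inter> ?Vc) = k2"
        and h="\<lambda>e'. verts e' - ?Vc" and xs=es and A="?V1'" and F="?E1"] by simp
  show "V1 \<subseteq> V1n" "Vcoln = insert u Vcol" "Xn = X(u := Some cx)" "Yn = Y(u := Some cy)" "En \<subseteq> E'"
    using assms eq m by auto
qed

lemma Gamma_mono: "A \<subseteq> B \<Longrightarrow> Gamma_ver E verts A \<subseteq> Gamma_ver E verts B"
  unfolding Gamma_ver_def by blast

lemma CX_upd:
  assumes "X u = None"
  shows "CX V E verts pin q (X(u := Some c)) = {\<sigma>\<in>CX V E verts pin q X. \<sigma> u = c}"
  using assms unfolding CX_def consistent_def by (auto split: if_splits)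

lemma cond_pmf_of_set_eq:
  assumes "finite C" "S \<subseteq> C" "S \<noteq> {}" "C \<inter> A = S"
  shows "cond_pmf (pmf_of_set C) A = pmf_of_set S"
proof (rule pmf_eqI)
  fix x
  have Cne: "C \<noteq> {}" using assms by auto
  have ne: "set_pmf (pmf_of_set C) \<inter> A \<noteq> {}" using assms Cne by simp
  have fS: "finite S" using assms finite_subset by blast
  have cS: "card S > 0" using fS assms by (simp add: card_gt_0_iff)
  have cC: "card C > 0" using assms Cne by (simp add: card_gt_0_iff)
  have m: "measure (measure_pmf (pmf_of_set C)) A = card S / card C"
    using measure_pmf_of_set[OF Cne assms(1)] assms by simp
  show "pmf (cond_pmf (pmf_of_set C) A) x = pmf (pmf_of_set S) x"
    using assms cS cC fS Cne by (auto simp: pmf_cond[OF ne] m indicator_def)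
qed

lemma pre_Gibbs_from:
  fixes \<mu> :: "'v pcol pmf"
  assumes fin: "finite (set_pmf \<mu>)" and finC: "finite C"
    and supp: "\<And>x. x \<in> set_pmf \<mu> \<Longrightarrow> CX V E verts pin q x \<subseteq> C \<and> CX V E verts pin q x \<noteq> {}
                 \<and> C \<inter> {\<tau>. consistent \<tau> x} = CX V E verts pin q x"
    and bnd: "bind_pmf \<mu> (\<lambda>x. pmf_of_set (CX V E verts pin q x)) = pmf_of_set C"
    and finCX: "\<And>x. finite (CX V E verts pin q x)"
  shows "pre_Gibbs \<mu> C"
  unfolding pre_Gibbs_def
proof
  fix \<sigma> assume "\<sigma> \<in> C"
  let ?\<nu> = "\<lambda>x. pmf_of_set (CX V E verts pin q x)"
  let ?A = "{\<sigma>'. consistent \<sigma> \<sigma>'}"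
  let ?B = "set_pmf \<mu> \<inter> ?A"
  let ?f = "\<lambda>\<sigma>'. pmf \<mu> \<sigma>' * pmf (cond_pmf (pmf_of_set C) {\<tau>. consistent \<tau> \<sigma>'}) \<sigma>"
  have "pmf (pmf_of_set C) \<sigma> = pmf (bind_pmf \<mu> ?\<nu>) \<sigma>" by (simp add: bnd)
  also have "\<dots> = (\<integral>x. pmf (?\<nu> x) \<sigma> \<partial>measure_pmf \<mu>)" by (rule pmf_bind)
  also have "\<dots> = (\<Sum>a\<in>set_pmf \<mu>. pmf (?\<nu> a) \<sigma> * pmf \<mu> a)"
    by (rule integral_measure_pmf_real[OF fin]) auto
  also have "\<dots> = (\<Sum>a\<in>?B. pmf (?\<nu> a) \<sigma> * pmf \<mu> a)"
  proof (rule sum.mono_neutral_right[OF fin])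
    show "?B \<subseteq> set_pmf \<mu>" by auto
    show "\<forall>a\<in>set_pmf \<mu> - ?B. pmf (?\<nu> a) \<sigma> * pmf \<mu> a = 0"
    proof
      fix a assume a: "a \<in> set_pmf \<mu> - ?B"
      then have "\<sigma> \<notin> CX V E verts pin q a" by (auto simp: CX_def)
      then show "pmf (?\<nu> a) \<sigma> * pmf \<mu> a = 0" using supp[of a] a finCX[of a] by simp
    qed
  qed
  also have "\<dots> = sum ?f ?B"
  proof (rule sum.cong[OF refl])
    fix a assume a: "a \<in> ?B"
    have "cond_pmf (pmf_of_set C) {\<tau>. consistent \<tau> a} = ?\<nu> a"
      by (rule cond_pmf_of_set_eq) (use supp[of a] a finC in auto)
    then show "pmf (?\<nu> a) \<sigma> * pmf \<mu> a = ?f a" by simp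
  qed
  finally have eq: "pmf (pmf_of_set C) \<sigma> = sum ?f ?B" .
  have "(?f has_sum sum ?f ?B) ?A"
    by (rule has_sum_finite_neutralI) (use fin in \<open>auto simp: set_pmf_iff\<close>)
  then have "infsum ?f ?A = sum ?f ?B" by (rule infsumI)
  then show "pmf (pmf_of_set C) \<sigma> = infsum ?f ?A" using eq by simp
qed

locale cp =
  fixes V :: "'v set" and E :: "'e set" and verts :: "'e \<Rightarrow> 'v set"
    and pin :: "'e \<Rightarrow> nat set" and q k2 :: nat and v :: 'v and c1 c2 :: nat
    and vs :: "'v list" and es :: "'e list"
    and coup :: "'v pcol \<Rightarrow> 'v pcol \<Rightarrow> 'v \<Rightarrow> (nat \<times> nat) pmf"
  assumes finV: "finite V" and setvs: "set vs = V" and setes: "set es = E"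
    and coupA: "\<forall>X Y u. maximal_coupling (coup X Y u)
                  (marginal V E verts pin q X u) (marginal V E verts pin q Y u)"
    and ne1: "Cfix V E verts pin q v c1 \<noteq> {}" and ne2: "Cfix V E verts pin q v c2 \<noteq> {}"
begin

abbreviation "CXv \<equiv> CX V E verts pin q"
abbreviation "step \<equiv> coupling_step V E verts pin q k2 vs es coup"

definition Inv :: "('v, 'e) cstate \<Rightarrow> bool" where
  "Inv s = (case s of (V1, Vcol, X, Y, E') \<Rightarrow>
      Vcol \<subseteq> Gamma_ver E verts V1 \<and> E' \<subseteq> E \<and> X v = Some c1 \<and> Y v = Some c2 \<and>
      (\<forall>w. w \<notin> Vcol \<longrightarrow> X w = None \<and> Y w = None) \<and> CXv X \<noteq> {} \<and> CXv Y \<noteq> {})"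

lemma marg_set:
  assumes "CXv X \<noteq> {}"
  shows "set_pmf (marginal V E verts pin q X u) = (\<lambda>\<sigma>. \<sigma> u) ` CXv X"
  using assms by (simp add: marginal_def finite_CX[OF finV])

lemma coup_set:
  assumes "(cx, cy) \<in> set_pmf (coup X Y u)"
  shows "cx \<in> set_pmf (marginal V E verts pin q X u)" "cy \<in> set_pmf (marginal V E verts pin q Y u)"
proof -
  have c: "map_pmf fst (coup X Y u) = marginal V E verts pin q X u"
          "map_pmf snd (coup X Y u) = marginal V E verts pin q Y u"
    using coupA unfolding maximal_coupling_def is_coupling_def by auto
  show "cx \<in> set_pmf (marginal V E verts pin q X u)"
    using assms by (simp add: c[symmetric]) (metis fst_conv image_eqI)
  show "cy \<in> set_pmf (marginal V E verts pin q Y u)"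
    using assms by (simp add: c[symmetric]) (metis snd_conv image_eqI)
qed

lemma col_facts:
  assumes inv: "Inv (V1, Vcol, X, Y, E')" and ex: "\<exists>e\<in>E'. crossing V verts V1 e"
  defines "e \<equiv> first_of es {e \<in> E'. crossing V verts V1 e}"
  defines "U \<equiv> verts e \<inter> (V - V1) - Vcol"
  assumes ne: "U \<noteq> {}"
  shows "e \<in> E" "crossing V verts V1 e" "first_of vs U \<in> verts e" "first_of vs U \<notin> V1"
        "first_of vs U \<notin> Vcol" "first_of vs U \<in> Gamma_ver E verts V1"
proof -
  have EE: "E' \<subseteq> E" using inv by (simp add: Inv_def)
  have "e \<in> {e \<in> E'. crossing V verts V1 e}"
    unfolding e_def by (rule first_of_in) (use ex EE setes in auto)
  then show e: "e \<in> E" "crossing V verts V1 e" using EE by auto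
  have "first_of vs U \<in> U" by (rule first_of_in) (use ne setvs U_def in auto)
  then show u: "first_of vs U \<in> verts e" "first_of vs U \<notin> V1" "first_of vs U \<notin> Vcol"
    unfolding U_def by auto
  from e(2) obtain w where "w \<in> verts e" "w \<in> V1" unfolding crossing_def by auto
  then show "first_of vs U \<in> Gamma_ver E verts V1"
    using e(1) u(1) unfolding Gamma_ver_def by blast
qed

lemma step_inv:
  assumes inv: "Inv s" and s': "s' \<in> set_pmf (step s)"
  shows "Inv s'"
proof -
  obtain V1 Vcol X Y E' where s: "s = (V1, Vcol, X, Y, E')" by (cases s) auto
  show ?thesis
  proof (cases "\<exists>e\<in>E'. crossing V verts V1 e")
    case False
    then show ?thesis using s' inv by (simp add: s step_eq)
  next
    case True
    define e where "e = first_of es {e \<in> E'. crossing V verts V1 e}"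
    define U where "U = verts e \<inter> (V - V1) - Vcol"
    have st: "step s = (if U = {} then return_pmf (V1, Vcol, X, Y, E' - {e}) else
       map_pmf (\<lambda>(cx,cy). newst V verts pin k2 es V1 Vcol X Y E' (first_of vs U) cx cy) (coup X Y (first_of vs U)))"
      by (simp add: s step_eq True e_def U_def Let_def)
    show ?thesis
    proof (cases "U = {}")
      case True
      then have "s' = (V1, Vcol, X, Y, E' - {e})" using s' st by simp
      then show ?thesis using inv
        by (auto simp: s Inv_def)
    next
      case False
      define u where "u = first_of vs U"
      note cf = col_facts[OF inv[unfolded s] True, folded e_def, folded U_def, OF False, folded u_def]
      obtain cx cy where cc: "(cx, cy) \<in> set_pmf (coup X Y u)"
        and s'e: "s' = newst V verts pin k2 es V1 Vcol X Y E' u cx cy"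
        using s' False st by (auto simp: u_def)
      obtain V1n Vcoln Xn Yn En where sn: "s' = (V1n, Vcoln, Xn, Yn, En)" by (cases s') auto
      note np = newst_props[OF s'e[symmetric, unfolded sn]]
      have I: "Vcol \<subseteq> Gamma_ver E verts V1" "E' \<subseteq> E" "X v = Some c1" "Y v = Some c2"
         "\<forall>w. w \<notin> Vcol \<longrightarrow> X w = None \<and> Y w = None" "CXv X \<noteq> {}" "CXv Y \<noteq> {}"
        using inv by (auto simp: s Inv_def)
      have Xu: "X u = None" "Y u = None" using I(5) cf(5) by auto
      have uv: "u \<noteq> v" using Xu I(3) by auto
      have cxs: "CXv (X(u := Some cx)) \<noteq> {}"
        using coup_set(1)[OF cc] marg_set[OF I(6)] CX_upd[where V=V and E=E and verts=verts and pin=pin and q=q and X=X and u=u and c=cx, OF Xu(1)] by auto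
      have cys: "CXv (Y(u := Some cy)) \<noteq> {}"
        using coup_set(2)[OF cc] marg_set[OF I(7)] CX_upd[where V=V and E=E and verts=verts and pin=pin and q=q and X=Y and u=u and c=cy, OF Xu(2)] by auto
      have G: "Vcoln \<subseteq> Gamma_ver E verts V1n"
        using np(1,2) I(1) cf(6) Gamma_mono[OF np(1), of E verts] by auto
      show ?thesis unfolding sn Inv_def
        using G np I uv cxs cys by auto
    qed
  qed
qed

lemma out_newst:
  "out_X (newst V verts pin k2 es V1 Vcol X Y E' u cx cy) = X(u := Some cx)"
  "out_Y (newst V verts pin k2 es V1 Vcol X Y E' u cx cy) = Y(u := Some cy)"
proof -
  obtain a b c d e where sn: "newst V verts pin k2 es V1 Vcol X Y E' u cx cy = (a, b, c, d, e)"
    by (cases "newst V verts pin k2 es V1 Vcol X Y E' u cx cy") auto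
  show "out_X (newst V verts pin k2 es V1 Vcol X Y E' u cx cy) = X(u := Some cx)"
       "out_Y (newst V verts pin k2 es V1 Vcol X Y E' u cx cy) = Y(u := Some cy)"
    using newst_props[OF sn] by (simp_all add: sn out_X_def out_Y_def)
qed

lemma step_shape:
  assumes inv: "Inv (V1, Vcol, X, Y, E')"
  obtains (ret) s'' where "step (V1, Vcol, X, Y, E') = return_pmf s''" "out_X s'' = X" "out_Y s'' = Y"
  | (col) u where "step (V1, Vcol, X, Y, E') =
        map_pmf (\<lambda>(cx, cy). newst V verts pin k2 es V1 Vcol X Y E' u cx cy) (coup X Y u)" "u \<notin> Vcol"
proof (cases "\<exists>e\<in>E'. crossing V verts V1 e")
  case False
  then show ?thesis using ret[of "(V1, Vcol, X, Y, E')"] by (simp add: step_eq out_X_def out_Y_def)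
next
  case True
  define e where "e = first_of es {e \<in> E'. crossing V verts V1 e}"
  define U where "U = verts e \<inter> (V - V1) - Vcol"
  have st: "step (V1, Vcol, X, Y, E') = (if U = {} then return_pmf (V1, Vcol, X, Y, E' - {e}) else
       map_pmf (\<lambda>(cx,cy). newst V verts pin k2 es V1 Vcol X Y E' (first_of vs U) cx cy) (coup X Y (first_of vs U)))"
    by (simp add: step_eq True e_def U_def Let_def)
  show ?thesis
  proof (cases "U = {}")
    case True
    then show ?thesis using ret[of "(V1, Vcol, X, Y, E' - {e})"] st by (simp add: out_X_def out_Y_def)
  next
    case False
    note cf = col_facts[OF inv True, folded e_def, folded U_def, OF False]
    show ?thesis using col[of "first_of vs U"] st False cf(5) by simp
  qed
qed

lemma step_fin:
  assumes inv: "Inv s"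
  shows "finite (set_pmf (step s))"
proof -
  obtain V1 Vcol X Y E' where s: "s = (V1, Vcol, X, Y, E')" by (cases s) auto
  have I: "CXv X \<noteq> {}" "CXv Y \<noteq> {}" using inv by (auto simp: s Inv_def)
  show ?thesis
  proof (cases rule: step_shape[OF inv[unfolded s], case_names ret col])
    case (ret s'')
    then show ?thesis by (simp add: s)
  next
    case (col u)
    have sub: "set_pmf (coup X Y u) \<subseteq> set_pmf (marginal V E verts pin q X u) \<times> set_pmf (marginal V E verts pin q Y u)"
      using coup_set by auto
    have "finite (set_pmf (coup X Y u))"
      by (rule finite_subset[OF sub]) (simp add: marg_set[OF I(1)] marg_set[OF I(2)] finite_CX[OF finV])
    then show ?thesis using col by (simp add: s)
  qed
qed

lemma mart_X:
  assumes inv: "Inv s"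
  shows "bind_pmf (step s) (\<lambda>s'. pmf_of_set (CXv (out_X s'))) = pmf_of_set (CXv (out_X s))"
proof -
  obtain V1 Vcol X Y E' where s: "s = (V1, Vcol, X, Y, E')" by (cases s) auto
  have I: "CXv X \<noteq> {}" "\<forall>w. w \<notin> Vcol \<longrightarrow> X w = None" using inv by (auto simp: s Inv_def)
  show ?thesis
  proof (cases rule: step_shape[OF inv[unfolded s], case_names ret col])
    case (ret s'')
    have "out_X (V1, Vcol, X, Y, E') = X" by (simp add: out_X_def)
    then show ?thesis using ret by (simp add: s bind_return_pmf)
  next
    case (col u)
    have Xu: "X u = None" using I col by auto
    have c: "map_pmf fst (coup X Y u) = marginal V E verts pin q X u"
      using coupA unfolding maximal_coupling_def is_coupling_def by auto
    have "bind_pmf (step s) (\<lambda>s'. pmf_of_set (CXv (out_X s')))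
        = bind_pmf (coup X Y u) (\<lambda>p. pmf_of_set (CXv (X(u := Some (fst p)))))"
      by (simp add: s col bind_map_pmf o_def split_def out_newst)
    also have "\<dots> = bind_pmf (map_pmf fst (coup X Y u)) (\<lambda>c. pmf_of_set (CXv (X(u := Some c))))"
      by (simp add: bind_map_pmf o_def)
    also have "\<dots> = bind_pmf (map_pmf (\<lambda>\<sigma>. \<sigma> u) (pmf_of_set (CXv X))) (\<lambda>c. pmf_of_set {\<sigma>\<in>CXv X. \<sigma> u = c})"
      by (simp add: c marginal_def CX_upd[where V=V and E=E and verts=verts and pin=pin and q=q and X=X and u=u, OF Xu])
    also have "\<dots> = pmf_of_set (CXv X)"
      by (rule pmf_of_set_split[OF finite_CX[OF finV] I(1)])
    finally show ?thesis by (simp add: s out_X_def)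
  qed
qed

lemma mart_Y:
  assumes inv: "Inv s"
  shows "bind_pmf (step s) (\<lambda>s'. pmf_of_set (CXv (out_Y s'))) = pmf_of_set (CXv (out_Y s))"
proof -
  obtain V1 Vcol X Y E' where s: "s = (V1, Vcol, X, Y, E')" by (cases s) auto
  have I: "CXv Y \<noteq> {}" "\<forall>w. w \<notin> Vcol \<longrightarrow> Y w = None" using inv by (auto simp: s Inv_def)
  show ?thesis
  proof (cases rule: step_shape[OF inv[unfolded s], case_names ret col])
    case (ret s'')
    have "out_Y (V1, Vcol, X, Y, E') = Y" by (simp add: out_Y_def)
    then show ?thesis using ret by (simp add: s bind_return_pmf)
  next
    case (col u)
    have Yu: "Y u = None" using I col by auto
    have c: "map_pmf snd (coup X Y u) = marginal V E verts pin q Y u"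
      using coupA unfolding maximal_coupling_def is_coupling_def by auto
    have "bind_pmf (step s) (\<lambda>s'. pmf_of_set (CXv (out_Y s')))
        = bind_pmf (coup X Y u) (\<lambda>p. pmf_of_set (CXv (Y(u := Some (snd p)))))"
      by (simp add: s col bind_map_pmf o_def split_def out_newst)
    also have "\<dots> = bind_pmf (map_pmf snd (coup X Y u)) (\<lambda>c. pmf_of_set (CXv (Y(u := Some c))))"
      by (simp add: bind_map_pmf o_def)
    also have "\<dots> = bind_pmf (map_pmf (\<lambda>\<sigma>. \<sigma> u) (pmf_of_set (CXv Y))) (\<lambda>c. pmf_of_set {\<sigma>\<in>CXv Y. \<sigma> u = c})"
      by (simp add: c marginal_def CX_upd[where V=V and E=E and verts=verts and pin=pin and q=q and X=Y and u=u, OF Yu])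
    also have "\<dots> = pmf_of_set (CXv Y)"
      by (rule pmf_of_set_split[OF finite_CX[OF finV] I(1)])
    finally show ?thesis by (simp add: s out_Y_def)
  qed
qed

lemma init_CX: "CXv ((\<lambda>_. None)(v := Some c)) = Cfix V E verts pin q v c"
  unfolding CX_def Cfix_def consistent_def by auto

lemma init_Inv: "Inv (coupling_init E v c1 c2)"
  unfolding Inv_def coupling_init_def using ne1 ne2
  by (auto simp: init_CX Gamma_ver_def)

abbreviation "iter n \<equiv> ((\<lambda>p. bind_pmf p step) ^^ n) (return_pmf (coupling_init E v c1 c2))"

lemma iter_props:
  "(\<forall>s\<in>set_pmf (iter n). Inv s) \<and> finite (set_pmf (iter n))
   \<and> bind_pmf (iter n) (\<lambda>s. pmf_of_set (CXv (out_X s))) = pmf_of_set (Cfix V E verts pin q v c1)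
   \<and> bind_pmf (iter n) (\<lambda>s. pmf_of_set (CXv (out_Y s))) = pmf_of_set (Cfix V E verts pin q v c2)"
proof (induction n)
  case 0
  then show ?case using init_Inv
    by (simp add: bind_return_pmf coupling_init_def out_X_def out_Y_def init_CX)
next
  case (Suc n)
  have it: "iter (Suc n) = bind_pmf (iter n) step" by simp
  have I: "\<forall>s\<in>set_pmf (iter n). Inv s" using Suc.IH by blast
  have A: "\<forall>s\<in>set_pmf (iter (Suc n)). Inv s" using I step_inv unfolding it by auto
  have B: "finite (set_pmf (iter (Suc n)))" using Suc.IH I step_fin unfolding it by auto
  have C: "bind_pmf (iter (Suc n)) (\<lambda>s. pmf_of_set (CXv (out_X s))) = pmf_of_set (Cfix V E verts pin q v c1)"
  proof -
    have "bind_pmf (iter (Suc n)) (\<lambda>s. pmf_of_set (CXv (out_X s)))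
       = bind_pmf (iter n) (\<lambda>s. bind_pmf (step s) (\<lambda>s. pmf_of_set (CXv (out_X s))))"
      unfolding it by (rule bind_assoc_pmf)
    also have "\<dots> = bind_pmf (iter n) (\<lambda>s. pmf_of_set (CXv (out_X s)))"
      by (rule bind_pmf_cong[OF refl]) (use I mart_X in auto)
    finally show ?thesis using Suc.IH by simp
  qed
  have D: "bind_pmf (iter (Suc n)) (\<lambda>s. pmf_of_set (CXv (out_Y s))) = pmf_of_set (Cfix V E verts pin q v c2)"
  proof -
    have "bind_pmf (iter (Suc n)) (\<lambda>s. pmf_of_set (CXv (out_Y s)))
       = bind_pmf (iter n) (\<lambda>s. bind_pmf (step s) (\<lambda>s. pmf_of_set (CXv (out_Y s))))"
      unfolding it by (rule bind_assoc_pmf)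
    also have "\<dots> = bind_pmf (iter n) (\<lambda>s. pmf_of_set (CXv (out_Y s)))"
      by (rule bind_pmf_cong[OF refl]) (use I mart_Y in auto)
    finally show ?thesis using Suc.IH by simp
  qed
  show ?case using A B C D by blast
qed

lemma finCfix: "finite (Cfix V E verts pin q v c)"
  by (rule finite_subset[OF _ finite_colourings[OF finV, of q]]) (auto simp: Cfix_def proper_colourings_def)

lemma main_result:
  "(\<forall>s\<in>set_pmf (iter n). out_Vcol s \<subseteq> Gamma_ver E verts (out_V1 s))
   \<and> pre_Gibbs (map_pmf out_X (iter n)) (Cfix V E verts pin q v c1)
   \<and> pre_Gibbs (map_pmf out_Y (iter n)) (Cfix V E verts pin q v c2)"
proof (intro conjI)
  note ip = iter_props[of n]
  show "\<forall>s\<in>set_pmf (iter n). out_Vcol s \<subseteq> Gamma_ver E verts (out_V1 s)"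
  proof
    fix s assume "s \<in> set_pmf (iter n)"
    then have "Inv s" using ip by blast
    then show "out_Vcol s \<subseteq> Gamma_ver E verts (out_V1 s)"
      by (cases s) (simp add: Inv_def out_Vcol_def out_V1_def)
  qed
  show "pre_Gibbs (map_pmf out_X (iter n)) (Cfix V E verts pin q v c1)"
  proof (rule pre_Gibbs_from[where V=V and E=E and verts=verts and pin=pin and q=q])
    show "finite (set_pmf (map_pmf out_X (iter n)))" using ip by simp
    show "finite (Cfix V E verts pin q v c1)" by (rule finCfix)
    show "\<And>x. finite (CXv x)" by (rule finite_CX[OF finV])
    show "bind_pmf (map_pmf out_X (iter n)) (\<lambda>x. pmf_of_set (CXv x)) = pmf_of_set (Cfix V E verts pin q v c1)"
      using ip by (simp add: bind_map_pmf o_def)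
    fix x assume "x \<in> set_pmf (map_pmf out_X (iter n))"
    then obtain s where s: "s \<in> set_pmf (iter n)" "x = out_X s" by auto
    then have "Inv s" using ip by blast
    then have xv: "x v = Some c1" "CXv x \<noteq> {}" using s by (cases s, simp add: Inv_def out_X_def)+
    show "CXv x \<subseteq> Cfix V E verts pin q v c1 \<and> CXv x \<noteq> {}
        \<and> Cfix V E verts pin q v c1 \<inter> {\<tau>. consistent \<tau> x} = CXv x"
      using xv by (auto simp: CX_def Cfix_def consistent_def)
  qed
  show "pre_Gibbs (map_pmf out_Y (iter n)) (Cfix V E verts pin q v c2)"
  proof (rule pre_Gibbs_from[where V=V and E=E and verts=verts and pin=pin and q=q])
    show "finite (set_pmf (map_pmf out_Y (iter n)))" using ip by simp
    show "finite (Cfix V E verts pin q v c2)" by (rule finCfix)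
    show "\<And>x. finite (CXv x)" by (rule finite_CX[OF finV])
    show "bind_pmf (map_pmf out_Y (iter n)) (\<lambda>x. pmf_of_set (CXv x)) = pmf_of_set (Cfix V E verts pin q v c2)"
      using ip by (simp add: bind_map_pmf o_def)
    fix x assume "x \<in> set_pmf (map_pmf out_Y (iter n))"
    then obtain s where s: "s \<in> set_pmf (iter n)" "x = out_Y s" by auto
    then have "Inv s" using ip by blast
    then have xv: "x v = Some c2" "CXv x \<noteq> {}" using s by (cases s, simp add: Inv_def out_Y_def)+
    show "CXv x \<subseteq> Cfix V E verts pin q v c2 \<and> CXv x \<noteq> {}
        \<and> Cfix V E verts pin q v c2 \<inter> {\<tau>. consistent \<tau> x} = CXv x"
      using xv by (auto simp: CX_def Cfix_def consistent_def)
  qed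
qed

end


theorem lemma3p1:
  fixes V :: "'v set" and E :: "'e set" and verts :: "'e \<Rightarrow> 'v set"
    and pin :: "'e \<Rightarrow> nat set" and q k k1 k2 :: nat and v :: 'v and c1 c2 :: nat
    and vs :: "'v list" and es :: "'e list"
    and coup :: "'v pcol \<Rightarrow> 'v pcol \<Rightarrow> 'v \<Rightarrow> (nat \<times> nat) pmf"
  assumes "finite V" and "finite E"
    and "\<forall>e\<in>E. verts e \<subseteq> V"
    and "\<forall>e\<in>E. pin e \<subseteq> {1..q}"
    and "0 < k2" and "k2 < k1" and "k1 \<le> k"
    and "\<forall>e\<in>E. k1 \<le> card (verts e) \<and> card (verts e) \<le> k"
    and "v \<in> V" and "c1 \<in> {1..q}" and "c2 \<in> {1..q}" and "c1 \<noteq> c2"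
    and "distinct vs" and "set vs = V" and "distinct es" and "set es = E"
    and "\<forall>X Y u. maximal_coupling (coup X Y u)
                  (marginal V E verts pin q X u) (marginal V E verts pin q Y u)"
    and "Cfix V E verts pin q v c1 \<noteq> {}" and "Cfix V E verts pin q v c2 \<noteq> {}"
  shows "(\<forall>s\<in>set_pmf (coupling_output V E verts pin q k2 vs es coup v c1 c2).
            out_Vcol s \<subseteq> Gamma_ver E verts (out_V1 s))
       \<and> pre_Gibbs (map_pmf out_X (coupling_output V E verts pin q k2 vs es coup v c1 c2))
                   (Cfix V E verts pin q v c1)
       \<and> pre_Gibbs (map_pmf out_Y (coupling_output V E verts pin q k2 vs es coup v c1 c2))
                   (Cfix V E verts pin q v c2)"
proof -
  interpret cp V E verts pin q k2 v c1 c2 vs es coup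
    using assms by unfold_locales auto
  show ?thesis using main_result[of "card V + card E"] by (simp add: coupling_output_def)
qed

end
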